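(* Let $\varepsilon>0$ and grant (NormEq) with constant $C'$ and (Q) with parameters $r$ and $\alpha$. Then every $f\in F$ with $\|f-f^*\|_{L_2}\le r$ satisfies $\|f-f^*\|_{L_2}^2\le\frac4\alpha P\mathcal L_f$.
   Context: Setting: $F$ is a convex class of measurable functions $\mathcal X\to\mathbb R$, $\mathcal Y=\mathbb R$, $(X,Y)\sim P$, $X\sim\mu$, $\|g\|_{L_p}=(\mathbb E|g(X)|^p)^{1/p}$. For $\tau\in(0,1)$ the quantile loss is $\ell_f(x,y)=(y-f(x))(\tau-\mathbf 1\{y-f(x)\le0\})$. $f^*$ is the (unique) minimizer of $f\mapsto P\ell_f=\mathbb E\ell_f(X,Y)$ over $F$, $\mathcal L_f=\ell_f-\ell_{f^*}$, $P\mathcal L_f=\mathbb E\mathcal L_f(X,Y)$. (NormEq): there is $C'>0$ such that $\|f-f^*\|_{L_{2+\varepsilon}}\le C'\|f-f^*\|_{L_2}$ for all $f\in F$. (Q): the conditional distribution of $Y$ given $X=x$ has a density $f_{Y|X=x}$, and there exist $\alpha>0$, $r>0$ such that for all $x\in\mathcal X$ and all $z\in\mathbb R$ with $|z-f^*(x)|\le r(\sqrt2C')^{(2+\varepsilon)/\varepsilon}$, $f_{Y|X=x}(z)\ge\alpha$. *)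

theory Defs
  imports "HOL-Probability.Probability"
begin

definition qloss :: "real \<Rightarrow> ('a \<Rightarrow> real) \<Rightarrow> 'a \<times> real \<Rightarrow> real" where
  "qloss \<tau> f = (\<lambda>(x, y). (y - f x) * (\<tau> - (if y - f x \<le> 0 then 1 else 0)))"

definition Lnorm :: "'a measure \<Rightarrow> real \<Rightarrow> ('a \<Rightarrow> real) \<Rightarrow> real" where
  "Lnorm \<mu> p g = (\<integral>x. \<bar>g x\<bar> powr p \<partial>\<mu>) powr (1 / p)"

end

theory Submission
  imports Defs
begin

lemma loss_pw:
  fixes d k t \<tau> :: real
  assumes "0 < t" "t < 1" "0 < \<tau>" "\<tau> < 1"
  defines "q \<equiv> \<lambda>u::real. u * (\<tau> - (if u \<le> 0 then 1 else 0))"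
  shows "(if k \<noteq> 0 \<and> t \<le> d / k \<and> d / k \<le> 1 then \<bar>k\<bar> * (1 - d / k) else 0)
     \<le> (q (d - k) - q d) - (q (d - t * k) - q d) / t"
proof -
  have qmax: "\<And>u. q u = max (\<tau>*u) ((\<tau>-1)*u)"
    unfolding q_def by (auto simp: max_def algebra_simps)
  have e: "d - t*k = (1-t)*d + t*(d-k)" by (simp add: algebra_simps)
  have l1: "\<tau>*(d - t*k) \<le> (1-t) * q d + t * q (d - k)"
  proof -
    have "\<tau>*(d - t*k) = (1-t)*(\<tau>*d) + t*(\<tau>*(d-k))" by (simp add: algebra_simps)
    also have "\<dots> \<le> (1-t) * q d + t * q (d - k)"
      using assms(1,2) by (intro add_mono mult_left_mono) (auto simp: qmax)
    finally show ?thesis .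
  qed
  have l2: "(\<tau>-1)*(d - t*k) \<le> (1-t) * q d + t * q (d - k)"
  proof -
    have "(\<tau>-1)*(d - t*k) = (1-t)*((\<tau>-1)*d) + t*((\<tau>-1)*(d-k))" by (simp add: algebra_simps)
    also have "\<dots> \<le> (1-t) * q d + t * q (d - k)"
      using assms(1,2) by (intro add_mono mult_left_mono) (auto simp: qmax)
    finally show ?thesis .
  qed
  have cvx: "q (d - t*k) \<le> (1-t) * q d + t * q (d - k)"
    using l1 l2 by (simp add: qmax)
  hence nn: "0 \<le> (q (d - k) - q d) - (q (d - t * k) - q d) / t"
    using assms(1) by (simp add: field_simps)
  show ?thesis
  proof (cases "k \<noteq> 0 \<and> t \<le> d / k \<and> d / k \<le> 1")
    case False
    then have "(if k \<noteq> 0 \<and> t \<le> d / k \<and> d / k \<le> 1 then \<bar>k\<bar> * (1 - d / k) else 0) = 0"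
      by (rule if_not_P)
    thus ?thesis using nn by linarith
  next
    case True
    note cnd = True
    then have k: "k \<noteq> 0" and s1: "t \<le> d/k" and s2: "d/k \<le> 1" by auto
    show ?thesis
    proof (cases "k > 0")
      case True
      have "t*k \<le> d" "d \<le> k" using s1 s2 True by (simp_all add: field_simps)
      moreover have "0 < t*k" using True assms by simp
      ultimately have dtk: "t*k \<le> d" "d \<le> k" "0 < d" by auto
      have q1: "q d = \<tau>*d" "q (d-k) = (\<tau>-1)*(d-k)" "q (d - t*k) = \<tau>*(d - t*k)"
        unfolding q_def using dtk by (auto simp: algebra_simps)
      have "\<bar>k\<bar> * (1 - d / k) = k - d" using True by (simp add: field_simps)
      moreover have "(q (d - t*k) - q d)/t = -\<tau>*k" using q1 assms(1) by (simp add: field_simps)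
      ultimately show ?thesis using \<open>k \<noteq> 0 \<and> t \<le> d / k \<and> d / k \<le> 1\<close> q1
        by (simp add: algebra_simps)
    next
      case False
      then have kn: "k < 0" using k by simp
      have "d \<le> t*k" "k \<le> d" using s1 s2 kn by (simp_all add: field_simps)
      moreover have "t*k < 0" using kn assms by (simp add: mult_pos_neg)
      ultimately have dtk: "d \<le> t*k" "k \<le> d" "d < 0" by auto
      have q1: "q d = (\<tau>-1)*d" "q (d-k) = \<tau>*(d-k)" "q (d - t*k) = (\<tau>-1)*(d - t*k)"
        unfolding q_def using dtk by (auto simp: algebra_simps)
      have "\<bar>k\<bar> * (1 - d / k) = d - k" using kn by (simp add: field_simps)
      moreover have X2: "(q (d - t*k) - q d)/t = -(\<tau>-1)*k" using q1 assms(1) by (simp add: field_simps)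
      moreover have R: "q (d - k) - q d - (q (d - t*k) - q d)/t = d - k"
        unfolding X2 q1 using assms(1) by (simp add: field_simps)
      moreover have e1: "(if k \<noteq> 0 \<and> t \<le> d / k \<and> d / k \<le> 1 then \<bar>k\<bar> * (1 - d / k) else 0) = \<bar>k\<bar> * (1 - d / k)"
        using cnd by (rule if_P)
      ultimately show ?thesis by linarith
    qed
  qed
qed

lemma quad_int:
  fixes a k t \<alpha> :: real
  assumes k: "k \<noteq> 0" and t: "0 < t" "t < 1" and al: "0 \<le> \<alpha>"
  shows "(\<integral>\<^sup>+y. ennreal (\<alpha> * (if t \<le> (y-a)/k \<and> (y-a)/k \<le> 1 then \<bar>k\<bar> * (1 - (y-a)/k) else 0)) \<partial>lborel)
     = ennreal (\<alpha> * ((1-t)^2/2) * k^2)"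
proof -
  have kk: "\<And>X. \<bar>k\<bar> * (\<bar>k\<bar> * X) = k * (k * (X::real))" by (metis abs_mult_self_eq mult.assoc)
  have "(\<integral>\<^sup>+y. ennreal (\<alpha> * (if t \<le> (y-a)/k \<and> (y-a)/k \<le> 1 then \<bar>k\<bar> * (1 - (y-a)/k) else 0)) \<partial>lborel)
      = \<bar>k\<bar> * (\<integral>\<^sup>+s. ennreal (\<alpha> * (if t \<le> ((a + k * s)-a)/k \<and> ((a + k * s)-a)/k \<le> 1 then \<bar>k\<bar> * (1 - ((a + k * s)-a)/k) else 0)) \<partial>lborel)"
    by (rule nn_integral_real_affine) (use k in auto)
  also have "(\<integral>\<^sup>+s. ennreal (\<alpha> * (if t \<le> ((a + k * s)-a)/k \<and> ((a + k * s)-a)/k \<le> 1 then \<bar>k\<bar> * (1 - ((a + k * s)-a)/k) else 0)) \<partial>lborel)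
      = (\<integral>\<^sup>+s. ennreal (\<alpha> * \<bar>k\<bar>) * (ennreal (1 - s) * indicator {t..1} s) \<partial>lborel)"
    using k al by (intro nn_integral_cong) (auto simp: indicator_def ennreal_mult' mult.assoc)
  also have "\<dots> = ennreal (\<alpha> * \<bar>k\<bar>) * (\<integral>\<^sup>+s. ennreal (1 - s) * indicator {t..1} s \<partial>lborel)"
    by (rule nn_integral_cmult) auto
  also have "(\<integral>\<^sup>+s. ennreal (1 - s) * indicator {t..1} s \<partial>lborel) = ennreal ((\<lambda>s. s - s^2/2) 1 - (\<lambda>s. s - s^2/2) t)"
    by (rule nn_integral_FTC_Icc) (use t in \<open>auto intro!: derivative_eq_intros\<close>)
  also have "(\<lambda>s::real. s - s^2/2) 1 - (\<lambda>s. s - s^2/2) t = (1-t)^2/2"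
    by (simp add: power2_eq_square field_simps)
  finally show ?thesis using al kk
    by (simp add: ennreal_mult'[symmetric] power2_eq_square abs_mult_self_eq mult_ac)
qed


theorem theorem6:
  fixes M :: "'a measure" and \<mu> :: "'a measure" and P :: "('a \<times> real) measure"
    and F :: "('a \<Rightarrow> real) set" and fs :: "'a \<Rightarrow> real"
    and cd :: "'a \<Rightarrow> real \<Rightarrow> real"
    and \<tau> \<epsilon> C' r \<alpha> :: real
  assumes mu_prob: "prob_space \<mu>" and mu_sets: "sets \<mu> = sets M"
    and P_prob: "prob_space P"
    \<comment> \<open>(X,Y) ~ P, X ~ mu, and Y given X = x has density cd x\<close>
    and cd_meas: "(\<lambda>(x, z). cd x z) \<in> borel_measurable (M \<Otimes>\<^sub>M lborel)"
    and cd_nonneg: "\<And>x z. 0 \<le> cd x z"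
    and P_def: "P = density (\<mu> \<Otimes>\<^sub>M lborel) (\<lambda>(x, z). ennreal (cd x z))"
    and marginal: "distr P M fst = \<mu>"
    and tau: "0 < \<tau>" "\<tau> < 1"
    \<comment> \<open>F convex class of measurable functions\<close>
    and F_meas: "F \<subseteq> borel_measurable M"
    and F_convex: "\<And>f g t. f \<in> F \<Longrightarrow> g \<in> F \<Longrightarrow> 0 \<le> t \<Longrightarrow> t \<le> 1 \<Longrightarrow>
                      (\<lambda>x. t * f x + (1 - t) * g x) \<in> F"
    \<comment> \<open>fs minimizes the quantile risk over F\<close>
    and fs_in: "fs \<in> F"
    and risk_int: "\<And>f. f \<in> F \<Longrightarrow> integrable P (qloss \<tau> f)"
    and fs_min: "\<And>f. f \<in> F \<Longrightarrow> (\<integral>w. qloss \<tau> fs w \<partial>P) \<le> (\<integral>w. qloss \<tau> f w \<partial>P)"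
    \<comment> \<open>(NormEq)\<close>
    and eps: "0 < \<epsilon>" and Cpos: "0 < C'"
    and NormEq: "\<And>f. f \<in> F \<Longrightarrow>
          integrable \<mu> (\<lambda>x. \<bar>f x - fs x\<bar> powr (2 + \<epsilon>)) \<and>
          Lnorm \<mu> (2 + \<epsilon>) (\<lambda>x. f x - fs x) \<le> C' * Lnorm \<mu> 2 (\<lambda>x. f x - fs x)"
    \<comment> \<open>(Q)\<close>
    and alpha: "0 < \<alpha>" and rpos: "0 < r"
    and Q: "\<And>x z. x \<in> space M \<Longrightarrow>
          \<bar>z - fs x\<bar> \<le> r * (sqrt 2 * C') powr ((2 + \<epsilon>) / \<epsilon>) \<Longrightarrow> \<alpha> \<le> cd x z"
  shows "\<forall>f\<in>F. Lnorm \<mu> 2 (\<lambda>x. f x - fs x) \<le> r \<longrightarrow>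
           (Lnorm \<mu> 2 (\<lambda>x. f x - fs x))\<^sup>2
             \<le> 4 / \<alpha> * (\<integral>w. (qloss \<tau> f w - qloss \<tau> fs w) \<partial>P)"

proof (intro ballI impI)
  fix f assume fF: "f \<in> F" and Lr: "Lnorm \<mu> 2 (\<lambda>x. f x - fs x) \<le> r"
  define h where "h = (\<lambda>x. f x - fs x)"
  define L where "L = Lnorm \<mu> 2 h"
  interpret mu: prob_space \<mu> by (rule mu_prob)
  interpret PP: prob_space P by (rule P_prob)
  have bmeq: "borel_measurable \<mu> = borel_measurable M" by (rule measurable_cong_sets[OF mu_sets refl])
  have sp: "space \<mu> = space M" by (rule sets_eq_imp_space_eq[OF mu_sets])
  have fM[measurable]: "f \<in> borel_measurable \<mu>" using F_meas fF bmeq by auto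
  have fsM[measurable]: "fs \<in> borel_measurable \<mu>" using F_meas fs_in bmeq by auto
  have hM[measurable]: "h \<in> borel_measurable \<mu>" unfolding h_def by measurable
  have LrL: "L \<le> r" using Lr unfolding L_def h_def .
  have NE: "integrable \<mu> (\<lambda>x. \<bar>h x\<bar> powr (2 + \<epsilon>))"
       "Lnorm \<mu> (2 + \<epsilon>) h \<le> C' * L"
    using NormEq[OF fF] unfolding h_def L_def by auto
  have int2: "integrable \<mu> (\<lambda>x. (h x)^2)"
  proof (rule Bochner_Integration.integrable_bound)
    show "integrable \<mu> (\<lambda>x. 1 + \<bar>h x\<bar> powr (2 + \<epsilon>))" using NE(1) by simp
    show "(\<lambda>x. (h x)^2) \<in> borel_measurable \<mu>" by measurable
    show "AE x in \<mu>. norm ((h x)^2) \<le> norm (1 + \<bar>h x\<bar> powr (2 + \<epsilon>))"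
    proof (intro AE_I2)
      fix x
      have "(h x)^2 \<le> 1 + \<bar>h x\<bar> powr (2 + \<epsilon>)"
      proof (cases "\<bar>h x\<bar> \<le> 1")
        case True
        then have "(h x)^2 \<le> 1"
          by (metis abs_ge_zero abs_le_square_iff abs_one one_le_numeral power_one power_increasing) 
        then show ?thesis by (smt (verit) powr_ge_zero)
      next
        case False
        then have "\<bar>h x\<bar> powr 2 \<le> \<bar>h x\<bar> powr (2 + \<epsilon>)" using eps by (intro powr_mono) auto
        then show ?thesis by simp
      qed
      then show "norm ((h x)^2) \<le> norm (1 + \<bar>h x\<bar> powr (2 + \<epsilon>))" by simp
    qed
  qed
  define I2 where "I2 = (\<integral>x. (h x)^2 \<partial>\<mu>)"
  have I2nn: "0 \<le> I2" unfolding I2_def by simp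
  have LI2: "L = sqrt I2"
    unfolding L_def Lnorm_def I2_def by (simp add: powr_half_sqrt)
  have L2: "L^2 = I2" using LI2 I2nn by simp
  have Lnn: "0 \<le> L" using LI2 I2nn by simp
  define c where "c = r * (sqrt 2 * C') powr ((2 + \<epsilon>) / \<epsilon>)"
  have cpos: "0 < c" unfolding c_def using rpos Cpos by simp
  define I2e where "I2e = (\<integral>x. \<bar>h x\<bar> powr (2 + \<epsilon>) \<partial>\<mu>)"
  have I2enn: "0 \<le> I2e" unfolding I2e_def by simp
  have "I2e = (Lnorm \<mu> (2 + \<epsilon>) h) powr (2 + \<epsilon>)"
    unfolding Lnorm_def I2e_def[symmetric] using eps I2enn by (simp add: powr_powr)
  also have "\<dots> \<le> (C' * L) powr (2 + \<epsilon>)"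
    using NE(2) eps by (intro powr_mono2) (auto simp: Lnorm_def)
  also have "\<dots> = C' powr (2 + \<epsilon>) * (L^2 * L powr \<epsilon>)"
    using Cpos Lnn by (simp add: powr_mult powr_add)
  also have "\<dots> \<le> C' powr (2 + \<epsilon>) * (L^2 * r powr \<epsilon>)"
    using Lnn LrL eps by (intro mult_left_mono powr_mono2) auto
  finally have I2e_le: "I2e \<le> C' powr (2 + \<epsilon>) * (L^2 * r powr \<epsilon>)" .
  define S where "S = sqrt 2 powr (2 + \<epsilon>)"
  have S2: "S = 2 * sqrt 2 powr \<epsilon>" unfolding S_def by (simp add: powr_add)
  have S_gt: "2 < S" unfolding S2 using eps by simp
  have cpow: "c powr \<epsilon> = r powr \<epsilon> * S * C' powr (2 + \<epsilon>)"
    unfolding c_def S_def using rpos Cpos eps by (simp add: powr_mult powr_powr)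
  have intE: "integrable \<mu> (\<lambda>x. \<bar>h x\<bar> powr (2 + \<epsilon>) / c powr \<epsilon>)" using NE(1) by simp
  have inttail: "integrable \<mu> (\<lambda>x. if \<bar>h x\<bar> \<le> c then 0 else (h x)^2)"
    by (rule Bochner_Integration.integrable_bound[OF int2]) auto
  have inthead: "integrable \<mu> (\<lambda>x. if \<bar>h x\<bar> \<le> c then (h x)^2 else 0)"
    by (rule Bochner_Integration.integrable_bound[OF int2]) auto
  have tail_pw: "(if \<bar>h x\<bar> \<le> c then 0 else (h x)^2) \<le> \<bar>h x\<bar> powr (2 + \<epsilon>) / c powr \<epsilon>" for x
  proof (cases "\<bar>h x\<bar> \<le> c")
    case True then show ?thesis by simp
  next
    case False
    have "(h x)^2 * c powr \<epsilon> \<le> (h x)^2 * \<bar>h x\<bar> powr \<epsilon>"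
      using False cpos eps by (intro mult_left_mono powr_mono2) auto
    also have "\<dots> = \<bar>h x\<bar> powr (2 + \<epsilon>)" by (simp add: powr_add)
    finally show ?thesis using False cpos by (simp add: field_simps)
  qed
  have "(\<integral>x. (if \<bar>h x\<bar> \<le> c then 0 else (h x)^2) \<partial>\<mu>) \<le> (\<integral>x. \<bar>h x\<bar> powr (2 + \<epsilon>) / c powr \<epsilon> \<partial>\<mu>)"
    by (rule integral_mono[OF inttail intE tail_pw])
  also have "\<dots> = I2e / c powr \<epsilon>" unfolding I2e_def by simp
  also have "\<dots> \<le> C' powr (2 + \<epsilon>) * (L^2 * r powr \<epsilon>) / c powr \<epsilon>"
    using I2e_le cpos by (simp add: divide_right_mono)
  also have "\<dots> = L^2 / S"
    unfolding cpow using rpos Cpos S_gt by (simp add: field_simps)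
  finally have tail: "(\<integral>x. (if \<bar>h x\<bar> \<le> c then 0 else (h x)^2) \<partial>\<mu>) \<le> L^2 / S" .
  define head where "head = (\<integral>x. (if \<bar>h x\<bar> \<le> c then (h x)^2 else 0) \<partial>\<mu>)"
  have "I2 = head + (\<integral>x. (if \<bar>h x\<bar> \<le> c then 0 else (h x)^2) \<partial>\<mu>)"
    unfolding I2_def head_def
    by (subst Bochner_Integration.integral_add[OF inthead inttail, symmetric]) (auto intro!: Bochner_Integration.integral_cong)
  moreover have "(1 - 1/S) * L^2 = L^2 - L^2/S" by (simp add: algebra_simps)
  ultimately have head_ge: "(1 - 1/S) * L^2 \<le> head" using tail L2 by linarith
  define A where "A = 1 / sqrt (2 * (1 - 1/S))"
  have S1: "1 < 2 * (1 - 1/S)" using S_gt by (simp add: field_simps)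
  have S1': "2 * (1 - 1/S) < 4" using S_gt by (simp add: field_simps)
  have Apos: "0 < A" unfolding A_def using S1 by simp
  have "1 < sqrt (2 * (1 - 1/S))" using S1 by (simp add: real_less_rsqrt)
  then have Alt1: "A < 1" unfolding A_def by (simp add: field_simps)
  have A2: "A^2 * (2 * (1 - 1/S)) = 1" unfolding A_def using S1
    by (simp add: power_divide)
  define t where "t = 1 - A"
  have t0: "0 < t" and t1: "t < 1" using Apos Alt1 unfolding t_def by auto
  define g where "g = (\<lambda>x. t * f x + (1 - t) * fs x)"
  have gF: "g \<in> F" unfolding g_def using F_convex[OF fF fs_in, of t] t0 t1 by simp
  define D where "D = (\<lambda>w. (qloss \<tau> f w - qloss \<tau> fs w) - (qloss \<tau> g w - qloss \<tau> fs w) / t)"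
  have intf: "integrable P (qloss \<tau> f)" and intfs: "integrable P (qloss \<tau> fs)"
    and intg: "integrable P (qloss \<tau> g)" using risk_int fF fs_in gF by auto
  have intD: "integrable P D" unfolding D_def using intf intfs intg by auto
  have intdiff: "integrable P (\<lambda>w. qloss \<tau> f w - qloss \<tau> fs w)" using intf intfs by auto
  have "(\<integral>w. D w \<partial>P) = (\<integral>w. (qloss \<tau> f w - qloss \<tau> fs w) \<partial>P)
      - ((\<integral>w. qloss \<tau> g w \<partial>P) - (\<integral>w. qloss \<tau> fs w \<partial>P)) / t"
    unfolding D_def using intf intfs intg by simp
  also have "\<dots> \<le> (\<integral>w. (qloss \<tau> f w - qloss \<tau> fs w) \<partial>P)"
    using fs_min[OF gF] t0 by simp
  finally have D_le: "(\<integral>w. D w \<partial>P) \<le> (\<integral>w. (qloss \<tau> f w - qloss \<tau> fs w) \<partial>P)" .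
  have setsP: "sets P = sets (\<mu> \<Otimes>\<^sub>M lborel)" unfolding P_def by simp
  have setsPM: "sets (\<mu> \<Otimes>\<^sub>M lborel) = sets (M \<Otimes>\<^sub>M lborel)"
    by (rule sets_pair_measure_cong[OF mu_sets refl])
  have spP: "space (\<mu> \<Otimes>\<^sub>M lborel) = space \<mu> \<times> UNIV" by (simp add: space_pair_measure)
  have cdM[measurable]: "(\<lambda>(x,z). cd x z) \<in> borel_measurable (\<mu> \<Otimes>\<^sub>M lborel)"
    using cd_meas by (simp add: measurable_cong_sets[OF setsPM refl])
  have DM[measurable]: "D \<in> borel_measurable (\<mu> \<Otimes>\<^sub>M lborel)"
    using borel_measurable_integrable[OF intD] by (simp add: measurable_cong_sets[OF setsP refl])
  define T where "T = (\<lambda>w. if h (fst w) \<noteq> 0 \<and> \<bar>h (fst w)\<bar> \<le> c \<and> t \<le> (snd w - fs (fst w)) / h (fst w)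
      \<and> (snd w - fs (fst w)) / h (fst w) \<le> 1 then \<bar>h (fst w)\<bar> * (1 - (snd w - fs (fst w)) / h (fst w)) else 0)"
  have TM[measurable]: "T \<in> borel_measurable (\<mu> \<Otimes>\<^sub>M lborel)" unfolding T_def by measurable
  have pw: "0 \<le> D w \<and> \<alpha> * T w \<le> cd (fst w) (snd w) * D w" if wsp: "w \<in> space (\<mu> \<Otimes>\<^sub>M lborel)" for w
  proof -
    obtain x y where w: "w = (x, y)" by (cases w)
    have xM: "x \<in> space M" using wsp w spP sp by auto
    note l1 = loss_pw[where d="y - fs x" and k="h x" and t=t and \<tau>=\<tau>, OF t0 t1 tau]
    have e1: "y - fs x - h x = y - f x" unfolding h_def by simp
    have e2: "y - fs x - t * h x = y - g x" unfolding h_def g_def by (simp add: algebra_simps)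
    define T1 where "T1 = (if h x \<noteq> 0 \<and> t \<le> (y - fs x) / h x \<and> (y - fs x) / h x \<le> 1
       then \<bar>h x\<bar> * (1 - (y - fs x) / h x) else 0)"
    have DT1: "T1 \<le> D w"
      using l1 unfolding e1 e2 T1_def[symmetric] D_def w qloss_def by simp
    have T1nn: "0 \<le> T1" unfolding T1_def by auto
    have Tw: "T w = (if \<bar>h x\<bar> \<le> c then T1 else 0)" unfolding T_def T1_def w by auto
    have Tnn: "0 \<le> T w" using Tw T1nn by simp
    have "\<alpha> * T w \<le> cd x y * D w"
    proof (cases "T w = 0")
      case True then show ?thesis using cd_nonneg DT1 T1nn by simp
    next
      case False
      then have cnd: "\<bar>h x\<bar> \<le> c" "h x \<noteq> 0" "t \<le> (y - fs x) / h x" "(y - fs x) / h x \<le> 1"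
        and Teq: "T w = T1"
        unfolding Tw T1_def by (auto split: if_splits)
      have r1: "\<bar>(y - fs x) / h x\<bar> \<le> 1" using cnd(3,4) t0 by linarith
      have "\<bar>y - fs x\<bar> = \<bar>(y - fs x) / h x\<bar> * \<bar>h x\<bar>" using cnd(2) by (simp add: abs_mult)
      also have "\<dots> \<le> 1 * \<bar>h x\<bar>" using r1 by (rule mult_right_mono) simp
      finally have "\<bar>y - fs x\<bar> \<le> c" using cnd(1) by simp
      then have "\<alpha> \<le> cd x y" using Q[OF xM] unfolding c_def by simp
      then show ?thesis using Tnn DT1 Teq alpha by (intro mult_mono) auto
    qed
    then show ?thesis using DT1 T1nn w by simp
  qed
  have DAE: "AE w in P. 0 \<le> D w"
    by (rule AE_I2) (use pw in \<open>auto simp: P_def\<close>)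
  have Dnn: "0 \<le> (\<integral>w. D w \<partial>P)" by (rule integral_nonneg_AE[OF DAE])
  define K where "K = \<alpha> * (A^2/2)"
  have Knn: "0 \<le> K" unfolding K_def using alpha by simp
  have "ennreal (K * head) = (\<integral>\<^sup>+x. ennreal (K * (if \<bar>h x\<bar> \<le> c then (h x)^2 else 0)) \<partial>\<mu>)"
    unfolding head_def
    by (subst nn_integral_eq_integral) (use inthead Knn in auto)
  also have "\<dots> = (\<integral>\<^sup>+x. (\<integral>\<^sup>+y. ennreal (\<alpha> * T (x, y)) \<partial>lborel) \<partial>\<mu>)"
  proof (rule nn_integral_cong)
    fix x
    show "ennreal (K * (if \<bar>h x\<bar> \<le> c then (h x)^2 else 0)) = (\<integral>\<^sup>+y. ennreal (\<alpha> * T (x, y)) \<partial>lborel)"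
    proof (cases "h x \<noteq> 0 \<and> \<bar>h x\<bar> \<le> c")
      case True
      then have "(\<lambda>y. ennreal (\<alpha> * T (x, y))) = (\<lambda>y. ennreal (\<alpha> * (if t \<le> (y - fs x) / h x \<and> (y - fs x) / h x \<le> 1
           then \<bar>h x\<bar> * (1 - (y - fs x) / h x) else 0)))"
        unfolding T_def by auto
      then have "(\<integral>\<^sup>+y. ennreal (\<alpha> * T (x, y)) \<partial>lborel) = ennreal (\<alpha> * ((1-t)^2/2) * (h x)^2)"
        using quad_int[where a="fs x" and k="h x" and t=t and \<alpha>=\<alpha>] True t0 t1 alpha by simp
      then show ?thesis using True unfolding K_def t_def by simp
    next
      case False
      then have "(\<lambda>y. ennreal (\<alpha> * T (x, y))) = (\<lambda>y. 0)" unfolding T_def by auto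
      moreover have "(if \<bar>h x\<bar> \<le> c then (h x)^2 else 0) = 0" using False by auto
      ultimately show ?thesis by simp
    qed
  qed
  also have "\<dots> = (\<integral>\<^sup>+w. ennreal (\<alpha> * T w) \<partial>(\<mu> \<Otimes>\<^sub>M lborel))"
    by (rule lborel.nn_integral_fst) measurable
  also have "\<dots> \<le> (\<integral>\<^sup>+w. (\<lambda>(x, z). ennreal (cd x z)) w * ennreal (D w) \<partial>(\<mu> \<Otimes>\<^sub>M lborel))"
  proof (rule nn_integral_mono)
    fix w :: "'a \<times> real" assume wsp: "w \<in> space (\<mu> \<Otimes>\<^sub>M lborel)"
    obtain x y where w: "w = (x, y)" by (cases w)
    have "ennreal (\<alpha> * T w) \<le> ennreal (cd x y * D w)" using pw[OF wsp] w by (intro ennreal_leI) simp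
    then show "ennreal (\<alpha> * T w) \<le> (\<lambda>(x, z). ennreal (cd x z)) w * ennreal (D w)"
      using w pw[OF wsp] cd_nonneg by (simp add: ennreal_mult)
  qed
  also have "\<dots> = (\<integral>\<^sup>+w. ennreal (D w) \<partial>P)"
    unfolding P_def by (rule nn_integral_density[symmetric]) measurable
  also have "\<dots> = ennreal (\<integral>w. D w \<partial>P)"
    by (rule nn_integral_eq_integral[OF intD DAE])
  finally have "ennreal (K * head) \<le> ennreal (\<integral>w. D w \<partial>P)" .
  then have Dge: "\<alpha> * (A^2/2) * head \<le> (\<integral>w. D w \<partial>P)"
    unfolding K_def[symmetric] using Dnn by (auto simp: ennreal_le_iff2)
  have "\<alpha> * (A^2/2) * ((1 - 1/S) * L^2) = \<alpha> / 4 * L^2 * (A^2 * (2 * (1 - 1/S)))"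
    by (simp add: algebra_simps)
  also have "\<dots> = \<alpha> / 4 * L^2" by (simp only: A2 mult_1_right)
  finally have "\<alpha> / 4 * L^2 = \<alpha> * (A^2/2) * ((1 - 1/S) * L^2)" by (rule sym)
  also have "\<dots> \<le> \<alpha> * (A^2/2) * head" using head_ge alpha by (intro mult_left_mono) auto
  finally have "\<alpha> / 4 * L^2 \<le> (\<integral>w. (qloss \<tau> f w - qloss \<tau> fs w) \<partial>P)" using Dge D_le by linarith
  then have final: "L^2 \<le> 4 / \<alpha> * (\<integral>w. (qloss \<tau> f w - qloss \<tau> fs w) \<partial>P)"
    using alpha by (simp add: field_simps)
  from final show "(Lnorm \<mu> 2 (\<lambda>x. f x - fs x))\<^sup>2 \<le> 4 / \<alpha> * (\<integral>w. (qloss \<tau> f w - qloss \<tau> fs w) \<partial>P)"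
    unfolding L_def h_def .
qed


end
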